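(* For every positive integer $t$ there is a constant $c(t)>0$ such that the following holds. Let $d\ge1$, $U=\{u_1,\dots,u_d\}$ the vertex set of a complete graph, $L$ a $t$-feasible list assignment of $U$, and let $A$ be the set of constrained vertices $u$ with $|L(u)|\le 2(3t+2)$. Let $\alpha,\beta\in\Omega^L_U$ and let $\xi_A$ be an injective map $A\to[d+1]$ with $\xi_A(u)\in L(u)$ for all $u\in A$, such that $\alpha|_A$ and $\xi_A$ differ on at most one vertex, and $\xi_A$ and $\beta|_A$ differ on at most one vertex. Then there are at least $c(t)|\Omega^L_U|$ colourings $\xi\in\Omega^L_U$ with $\xi|_A=\xi_A$ such that both $(\alpha,\xi)$ and $(\xi,\beta)$ are good pairs.
   Context: Lists $L(u)\subseteq[d+1]$; an $L$-colouring is an injective $\alpha:U\to[d+1]$ with $\alpha(u)\in L(u)$; $\Omega^L_U$ is their set. $L$ is $t$-feasible if $|L(u_i)|\ge t+1$ for $i\in[t]$ and $|L(u_i)|=d+1$ for $i\in[d]\setminus[t]$. A vertex $u$ is free if $|L(u)|=d+1$ and constrained otherwise. Add an extra vertex $w$ (regarded as free) and extend each $\alpha\in\Omega^L_U$ by letting $\alpha(w)$ be the unique colour of $[d+1]$ not in $\alpha(U)$. For $\alpha,\beta\in\Omega^L_U$ let $f(\alpha,\beta)$ be the permutation of $U\cup\{w\}$ with $f(x)=y$ iff $\alpha(x)=\beta(y)$; $(\alpha,\beta)$ is a good pair if $f(\alpha,\beta)$ has no cycle of length at least $2$ all of whose vertices are constrained. *)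

theory Defs
  imports Complex_Main "HOL-Library.FuncSet"
begin

text \<open>Vertices u_1..u_d are the naturals 1..d; the extra vertex w is 0.
  Colours are [d+1] = {1..d+1}. A list assignment is L :: nat => nat set.\<close>

definition t_feasible :: "nat \<Rightarrow> nat \<Rightarrow> (nat \<Rightarrow> nat set) \<Rightarrow> bool" where
  "t_feasible d t L \<longleftrightarrow>
     (\<forall>i\<in>{1..d}. L i \<subseteq> {1..d+1}) \<and>
     (\<forall>i\<in>{1..d}. i \<le> t \<longrightarrow> card (L i) \<ge> t + 1) \<and>
     (\<forall>i\<in>{1..d}. t < i \<longrightarrow> card (L i) = d + 1)"

definition L_colourings :: "nat \<Rightarrow> (nat \<Rightarrow> nat set) \<Rightarrow> (nat \<Rightarrow> nat) set" where
  "L_colourings d L = {\<alpha>. \<alpha> \<in> {1..d} \<rightarrow>\<^sub>E {1..d+1} \<and> inj_on \<alpha> {1..d} \<and>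
                          (\<forall>u\<in>{1..d}. \<alpha> u \<in> L u)}"

definition constrained :: "nat \<Rightarrow> (nat \<Rightarrow> nat set) \<Rightarrow> nat \<Rightarrow> bool" where
  "constrained d L u \<longleftrightarrow> u \<in> {1..d} \<and> card (L u) \<noteq> d + 1"

definition ext_col :: "nat \<Rightarrow> (nat \<Rightarrow> nat) \<Rightarrow> nat \<Rightarrow> nat" where
  "ext_col d \<alpha> x = (if x = 0 then (THE c. c \<in> {1..d+1} - \<alpha> ` {1..d}) else \<alpha> x)"

definition perm_f :: "nat \<Rightarrow> (nat \<Rightarrow> nat) \<Rightarrow> (nat \<Rightarrow> nat) \<Rightarrow> nat \<Rightarrow> nat" where
  "perm_f d \<alpha> \<beta> x = (THE y. y \<in> {0..d} \<and> ext_col d \<alpha> x = ext_col d \<beta> y)"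

definition good_pair :: "nat \<Rightarrow> (nat \<Rightarrow> nat set) \<Rightarrow> (nat \<Rightarrow> nat) \<Rightarrow> (nat \<Rightarrow> nat) \<Rightarrow> bool" where
  "good_pair d L \<alpha> \<beta> \<longleftrightarrow>
     \<not> (\<exists>x\<in>{0..d}. perm_f d \<alpha> \<beta> x \<noteq> x \<and>
          (\<forall>k. constrained d L ((perm_f d \<alpha> \<beta> ^^ k) x)))"

end

theory Submission
  imports Defs
begin


lemma Lcol_D:
  assumes "\<alpha> \<in> L_colourings d L"
  shows "\<alpha> \<in> {1..d} \<rightarrow>\<^sub>E {1..d+1}" "inj_on \<alpha> {1..d}" "\<And>u. u \<in> {1..d} \<Longrightarrow> \<alpha> u \<in> L u"
  using assms unfolding L_colourings_def by auto

lemma missing_colour: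
  assumes "\<alpha> \<in> L_colourings d L"
  shows "\<exists>m. {1..d+1} - \<alpha> ` {1..d} = {m}"
proof -
  have sub: "\<alpha> ` {1..d} \<subseteq> {1..d+1}" using Lcol_D(1)[OF assms] by auto
  have "card (\<alpha> ` {1..d}) = d" using Lcol_D(2)[OF assms] by (simp add: card_image)
  then have "card ({1..d+1} - \<alpha> ` {1..d}) = 1" using sub by (simp add: card_Diff_subset)
  then show ?thesis by (meson card_1_singletonE)
qed

lemma ext_col_pos: "x \<noteq> 0 \<Longrightarrow> ext_col d \<alpha> x = \<alpha> x"
  unfolding ext_col_def by simp

lemma ext_col_bij:
  assumes "\<alpha> \<in> L_colourings d L"
  shows "bij_betw (ext_col d \<alpha>) {0..d} {1..d+1}"
proof -
  obtain m where m: "{1..d+1} - \<alpha> ` {1..d} = {m}" using missing_colour[OF assms] by blast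
  have e0: "ext_col d \<alpha> 0 = m" unfolding ext_col_def using m by simp
  have sub: "\<alpha> ` {1..d} \<subseteq> {1..d+1}" using Lcol_D(1)[OF assms] by auto
  have eq: "{0..d} = insert 0 {1..d}" by auto
  have i1: "ext_col d \<alpha> ` {1..d} = \<alpha> ` {1..d}" by (rule image_cong) (auto simp: ext_col_pos)
  have i2: "inj_on (ext_col d \<alpha>) {1..d}" using Lcol_D(2)[OF assms]
    by (rule inj_on_cong[THEN iffD2, rotated]) (auto simp: ext_col_pos)
  have mm: "m \<notin> \<alpha> ` {1..d}" "m \<in> {1..d+1}" using m by auto
  have j1: "inj_on (ext_col d \<alpha>) (insert 0 {1..d})"
    unfolding inj_on_insert using i1 i2 mm e0 by (simp add: image_set_diff[symmetric])
  have j2: "ext_col d \<alpha> ` (insert 0 {1..d}) = insert m (\<alpha> ` {1..d})"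
    using i1 e0 by simp
  have "\<alpha> ` {1..d} \<union> ({1..d+1} - \<alpha> ` {1..d}) = {1..d+1}" by (rule Diff_partition[OF sub])
  then have "\<alpha> ` {1..d} \<union> {m} = {1..d+1}" by (simp only: m)
  then have j3: "insert m (\<alpha> ` {1..d}) = {1..d+1}" by simp
  show ?thesis unfolding bij_betw_def eq using j1 j2 j3 by simp
qed

lemma perm_f_props:
  assumes "\<alpha> \<in> L_colourings d L" "\<beta> \<in> L_colourings d L" "x \<in> {0..d}"
  shows "perm_f d \<alpha> \<beta> x \<in> {0..d} \<and> ext_col d \<alpha> x = ext_col d \<beta> (perm_f d \<alpha> \<beta> x)"
proof -
  have ba: "bij_betw (ext_col d \<alpha>) {0..d} {1..d+1}" and bb: "bij_betw (ext_col d \<beta>) {0..d} {1..d+1}"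
    using ext_col_bij assms by blast+
  have "ext_col d \<alpha> x \<in> {1..d+1}" using ba assms(3) by (meson bij_betwE)
  then obtain y where y: "y \<in> {0..d}" "ext_col d \<beta> y = ext_col d \<alpha> x"
    using bb unfolding bij_betw_def by (metis imageE)
  have "\<exists>!y. y \<in> {0..d} \<and> ext_col d \<alpha> x = ext_col d \<beta> y"
  proof (rule ex1I[of _ y])
    show "y \<in> {0..d} \<and> ext_col d \<alpha> x = ext_col d \<beta> y" using y by simp
    fix z assume "z \<in> {0..d} \<and> ext_col d \<alpha> x = ext_col d \<beta> z"
    then show "z = y" using y bb unfolding bij_betw_def inj_on_def by metis
  qed
  then show ?thesis unfolding perm_f_def by (rule theI')
qed

lemma perm_f_inj:
  assumes "\<alpha> \<in> L_colourings d L" "\<beta> \<in> L_colourings d L" "x \<in> {0..d}" "y \<in> {0..d}"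
    "perm_f d \<alpha> \<beta> x = perm_f d \<alpha> \<beta> y"
  shows "x = y"
proof -
  have ba: "bij_betw (ext_col d \<alpha>) {0..d} {1..d+1}" using ext_col_bij assms by blast
  have "ext_col d \<alpha> x = ext_col d \<alpha> y" using perm_f_props[OF assms(1,2)] assms(3,4,5) by metis
  then show ?thesis using ba assms(3,4) unfolding bij_betw_def inj_on_def by blast
qed

lemma constrained_ext: "constrained d L u \<Longrightarrow> ext_col d \<alpha> u = \<alpha> u \<and> u \<in> {0..d}"
  unfolding constrained_def using ext_col_pos[of u d \<alpha>] by auto

lemma card_le1_eq: "finite X \<Longrightarrow> card X \<le> 1 \<Longrightarrow> a \<in> X \<Longrightarrow> b \<in> X \<Longrightarrow> a = b"
  using card_le_Suc0_iff_eq[of X] by auto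

lemma good1:
  assumes a: "\<alpha> \<in> L_colourings d L" and x: "\<xi> \<in> L_colourings d L"
    and avoid: "\<And>z. constrained d L z \<Longrightarrow> z \<notin> A \<Longrightarrow> \<xi> z \<notin> \<alpha> ` {u. constrained d L u}"
    and A: "A \<subseteq> {1..d}" and D: "card {u\<in>A. \<alpha> u \<noteq> \<xi> u} \<le> 1"
  shows "good_pair d L \<alpha> \<xi>"
  unfolding good_pair_def
proof
  assume "\<exists>x\<in>{0..d}. perm_f d \<alpha> \<xi> x \<noteq> x \<and> (\<forall>k. constrained d L ((perm_f d \<alpha> \<xi> ^^ k) x))"
  then obtain x0 where x0: "x0 \<in> {0..d}" and ne: "perm_f d \<alpha> \<xi> x0 \<noteq> x0"
     and all: "\<And>k. constrained d L ((perm_f d \<alpha> \<xi> ^^ k) x0)" by blast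
  define f where "f = perm_f d \<alpha> \<xi>"
  have c0: "constrained d L x0" using all[of 0] by simp
  have c1: "constrained d L (f x0)" using all[of 1] by (simp add: f_def)
  have c2: "constrained d L (f (f x0))" using all[of 2] by (simp add: f_def numeral_2_eq_2)
  have c3: "constrained d L (f (f (f x0)))" using all[of 3] by (simp add: f_def numeral_3_eq_3)
  have step: "\<alpha> z = \<xi> (f z)" if "constrained d L z" "constrained d L (f z)" for z
    using perm_f_props[OF a x, of z] constrained_ext[OF that(1), of \<alpha>] constrained_ext[OF that(2), of \<xi>]
    unfolding f_def by simp
  have inA: "f z \<in> A" if "constrained d L z" "constrained d L (f z)" for z
    using avoid[OF that(2)] step[OF that] that(1) by (metis imageI mem_Collect_eq)
  have injf: "z1 = z2" if "z1 \<in> {0..d}" "z2 \<in> {0..d}" "f z1 = f z2" for z1 z2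
    using perm_f_inj[OF a x that(1,2)] that(3) unfolding f_def by blast
  have injx: "inj_on \<xi> {1..d}" using Lcol_D(2)[OF x] .
  have cd: "constrained d L z \<Longrightarrow> z \<in> {1..d}" for z unfolding constrained_def by auto
  have n1: "f (f x0) \<noteq> f x0"
    using injf[of "f x0" x0] ne x0 c1 cd unfolding f_def by auto
  have d1: "\<alpha> (f x0) \<noteq> \<xi> (f x0)"
  proof
    assume "\<alpha> (f x0) = \<xi> (f x0)"
    then have "\<xi> (f (f x0)) = \<xi> (f x0)" using step[OF c1 c2] by simp
    then show False using n1 injx c1 c2 cd unfolding inj_on_def by blast
  qed
  have n2: "f (f (f x0)) \<noteq> f (f x0)"
    using injf[of "f (f x0)" "f x0"] n1 c1 c2 cd by auto
  have d2: "\<alpha> (f (f x0)) \<noteq> \<xi> (f (f x0))"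
  proof
    assume "\<alpha> (f (f x0)) = \<xi> (f (f x0))"
    then have "\<xi> (f (f (f x0))) = \<xi> (f (f x0))" using step[OF c2 c3] by simp
    then show False using n2 injx c2 c3 cd unfolding inj_on_def by blast
  qed
  have "f x0 \<in> {u\<in>A. \<alpha> u \<noteq> \<xi> u}" "f (f x0) \<in> {u\<in>A. \<alpha> u \<noteq> \<xi> u}"
    using inA[OF c0 c1] inA[OF c1 c2] d1 d2 by auto
  moreover have "finite {u\<in>A. \<alpha> u \<noteq> \<xi> u}" by (rule finite_subset[of _ "{1..d}"]) (use A in auto)
  ultimately have "f x0 = f (f x0)" using D
    by (meson card_le1_eq)
  then show False using n1 by simp
qed

lemma good2:
  assumes x: "\<xi> \<in> L_colourings d L" and b: "\<beta> \<in> L_colourings d L"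
    and avoid: "\<And>z. constrained d L z \<Longrightarrow> z \<notin> A \<Longrightarrow> \<xi> z \<notin> \<beta> ` {u. constrained d L u}"
    and A: "A \<subseteq> {1..d}" and D: "card {u\<in>A. \<xi> u \<noteq> \<beta> u} \<le> 1"
  shows "good_pair d L \<xi> \<beta>"
  unfolding good_pair_def
proof
  assume "\<exists>x\<in>{0..d}. perm_f d \<xi> \<beta> x \<noteq> x \<and> (\<forall>k. constrained d L ((perm_f d \<xi> \<beta> ^^ k) x))"
  then obtain x0 where x0: "x0 \<in> {0..d}" and ne: "perm_f d \<xi> \<beta> x0 \<noteq> x0"
     and all: "\<And>k. constrained d L ((perm_f d \<xi> \<beta> ^^ k) x0)" by blast
  define f where "f = perm_f d \<xi> \<beta>"
  have c0: "constrained d L x0" using all[of 0] by simp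
  have c1: "constrained d L (f x0)" using all[of 1] by (simp add: f_def)
  have c2: "constrained d L (f (f x0))" using all[of 2] by (simp add: f_def numeral_2_eq_2)
  have step: "\<xi> z = \<beta> (f z)" if "constrained d L z" "constrained d L (f z)" for z
    using perm_f_props[OF x b, of z] constrained_ext[OF that(1), of \<xi>] constrained_ext[OF that(2), of \<beta>]
    unfolding f_def by simp
  have inA: "z \<in> A" if "constrained d L z" "constrained d L (f z)" for z
    using avoid[OF that(1)] step[OF that] that(2) by auto
  have injf: "z1 = z2" if "z1 \<in> {0..d}" "z2 \<in> {0..d}" "f z1 = f z2" for z1 z2
    using perm_f_inj[OF x b that(1,2)] that(3) unfolding f_def by blast
  have injb: "inj_on \<beta> {1..d}" using Lcol_D(2)[OF b] .
  have cd: "constrained d L z \<Longrightarrow> z \<in> {1..d}" for z unfolding constrained_def by auto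
  have n1: "f (f x0) \<noteq> f x0"
    using injf[of "f x0" x0] ne x0 c1 cd unfolding f_def by auto
  have d0: "\<xi> x0 \<noteq> \<beta> x0"
  proof
    assume "\<xi> x0 = \<beta> x0"
    then have "\<beta> (f x0) = \<beta> x0" using step[OF c0 c1] by simp
    then show False using ne injb c0 c1 cd unfolding inj_on_def f_def by blast
  qed
  have d1: "\<xi> (f x0) \<noteq> \<beta> (f x0)"
  proof
    assume "\<xi> (f x0) = \<beta> (f x0)"
    then have "\<beta> (f (f x0)) = \<beta> (f x0)" using step[OF c1 c2] by simp
    then show False using n1 injb c1 c2 cd unfolding inj_on_def by blast
  qed
  have "x0 \<in> {u\<in>A. \<xi> u \<noteq> \<beta> u}" "f x0 \<in> {u\<in>A. \<xi> u \<noteq> \<beta> u}"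
    using inA[OF c0 c1] inA[OF c1 c2] d0 d1 by auto
  moreover have "finite {u\<in>A. \<xi> u \<noteq> \<beta> u}" by (rule finite_subset[of _ "{1..d}"]) (use A in auto)
  ultimately have "x0 = f x0" using D
    by (meson card_le1_eq)
  then show False using ne f_def by simp
qed



lemma inj_count:
  assumes "finite B" "\<forall>b\<in>B. finite (M b)" "card B \<le> n+1"
  shows "(\<Prod>b\<in>B. card (M b) - n) \<le> card {\<psi> \<in> Pi\<^sub>E B M. inj_on \<psi> B}"
  using assms
proof (induction B rule: finite_induct)
  case empty
  then show ?case by simp
next
  case (insert b B)
  define X where "X = {\<psi> \<in> Pi\<^sub>E B M. inj_on \<psi> B}"
  define Y where "Y = {\<psi> \<in> Pi\<^sub>E (insert b B) M. inj_on \<psi> (insert b B)}"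
  define h where "h = (\<lambda>(\<psi>::'a \<Rightarrow> 'b, c). \<psi>(b := c))"
  have cB: "card B \<le> n" using insert by simp
  have IH: "(\<Prod>b\<in>B. card (M b) - n) \<le> card X" using insert unfolding X_def by simp
  have finX: "finite X" unfolding X_def
    by (rule finite_subset[of _ "Pi\<^sub>E B M"]) (use insert in \<open>auto intro!: finite_PiE\<close>)
  have finY: "finite Y" unfolding Y_def
    by (rule finite_subset[of _ "Pi\<^sub>E (insert b B) M"]) (use insert in \<open>auto intro!: finite_PiE\<close>)
  have img: "h ` Sigma X (\<lambda>\<psi>. M b - \<psi> ` B) \<subseteq> Y"
  proof
    fix y assume "y \<in> h ` Sigma X (\<lambda>\<psi>. M b - \<psi> ` B)"
    then obtain \<psi> c where y: "y = \<psi>(b := c)" and p: "\<psi> \<in> Pi\<^sub>E B M" "inj_on \<psi> B" "c \<in> M b" "c \<notin> \<psi> ` B"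
      unfolding h_def X_def by auto
    have "y \<in> Pi\<^sub>E (insert b B) M" using p y insert(2) by (auto simp: PiE_def Pi_def extensional_def)
    moreover have "inj_on y (insert b B)" using p y insert(2)
      by (auto simp: inj_on_def)
    ultimately show "y \<in> Y" unfolding Y_def by simp
  qed
  have inj: "inj_on h (Sigma X (\<lambda>\<psi>. M b - \<psi> ` B))"
  proof (rule inj_onI)
    fix p q assume p: "p \<in> Sigma X (\<lambda>\<psi>. M b - \<psi> ` B)" and q: "q \<in> Sigma X (\<lambda>\<psi>. M b - \<psi> ` B)"
      and e: "h p = h q"
    obtain \<psi>1 c1 where p': "p = (\<psi>1, c1)" by fastforce
    obtain \<psi>2 c2 where q': "q = (\<psi>2, c2)" by fastforce
    have m: "\<psi>1 \<in> Pi\<^sub>E B M" "\<psi>2 \<in> Pi\<^sub>E B M" using p q p' q' unfolding X_def by auto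
    have e': "\<psi>1(b := c1) = \<psi>2(b := c2)" using e p' q' h_def by simp
    have "c1 = c2" using fun_cong[OF e', of b] by simp
    moreover have "\<psi>1 = \<psi>2"
    proof
      fix x show "\<psi>1 x = \<psi>2 x"
      proof (cases "x = b")
        case True
        then have "x \<notin> B" using insert(2) by simp
        then show ?thesis using m by (simp add: PiE_def extensional_def)
      next
        case False
        then show ?thesis using fun_cong[OF e', of x] by simp
      qed
    qed
    ultimately show "p = q" using p' q' by simp
  qed
  have "card (Sigma X (\<lambda>\<psi>. M b - \<psi> ` B)) \<le> card Y"
    using card_inj_on_le[OF inj img finY] .
  moreover have "card (Sigma X (\<lambda>\<psi>. M b - \<psi> ` B)) = (\<Sum>\<psi>\<in>X. card (M b - \<psi> ` B))"
    using finX insert by (intro card_SigmaI) auto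
  moreover have "(\<Sum>\<psi>\<in>X. card (M b) - n) \<le> (\<Sum>\<psi>\<in>X. card (M b - \<psi> ` B))"
  proof (rule sum_mono)
    fix \<psi> assume "\<psi> \<in> X"
    have "card (M b) - n \<le> card (M b) - card (\<psi> ` B)"
      using card_image_le[OF insert(1), of \<psi>] cB by linarith
    also have "\<dots> \<le> card (M b - \<psi> ` B)" using insert(1) by (simp add: diff_card_le_card_Diff)
    finally show "card (M b) - n \<le> card (M b - \<psi> ` B)" .
  qed
  moreover have "(\<Sum>\<psi>\<in>X. card (M b) - n) = card X * (card (M b) - n)" by simp
  moreover have "(\<Prod>b\<in>insert b B. card (M b) - n) = (card (M b) - n) * (\<Prod>b\<in>B. card (M b) - n)"
    using insert by simp
  moreover have "(card (M b) - n) * (\<Prod>b\<in>B. card (M b) - n) \<le> card X * (card (M b) - n)"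
    using IH by (simp add: mult.commute)
  ultimately show ?case unfolding Y_def by linarith
qed

lemma fiber_count:
  assumes "finite X" "finite Y" "\<And>x. x \<in> X \<Longrightarrow> r x \<in> Y" "\<And>y. y \<in> Y \<Longrightarrow> card {x\<in>X. r x = y} = N"
  shows "card X = card Y * N"
proof -
  have "X = (\<Union>y\<in>Y. {x\<in>X. r x = y})" using assms(3) by auto
  moreover have "card (\<Union>y\<in>Y. {x\<in>X. r x = y}) = (\<Sum>y\<in>Y. card {x\<in>X. r x = y})"
    by (rule card_UN_disjoint) (use assms(1,2) in auto)
  ultimately have "card X = (\<Sum>y\<in>Y. card {x\<in>X. r x = y})" by simp
  also have "\<dots> = card Y * N" using assms(4) by simp
  finally show ?thesis .
qed



lemma fiber_lemma:
  assumes tf: "t_feasible d t L"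
    and Cdef: "C = {u. constrained d L u}" and Fdef: "F = {1..d} - C"
    and phi: "\<phi> \<in> C \<rightarrow>\<^sub>E {1..d+1}" "inj_on \<phi> C" "\<forall>u\<in>C. \<phi> u \<in> L u"
  shows "card {\<alpha>'\<in>L_colourings d L. restrict \<alpha>' C = \<phi>} = prod ((-) (d + 1 - card C)) {0..<card F}"
proof -
  define T where "T = {1..d+1} - \<phi> ` C"
  define I where "I = {g \<in> F \<rightarrow>\<^sub>E T. inj_on g F}"
  define X where "X = {\<alpha>'\<in>L_colourings d L. restrict \<alpha>' C = \<phi>}"
  have Cd: "C \<subseteq> {1..d}" unfolding Cdef constrained_def by auto
  have finC: "finite C" using Cd finite_subset by blast
  have finF: "finite F" unfolding Fdef by simp
  have phiC: "\<phi> ` C \<subseteq> {1..d+1}" using phi(1) by auto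
  have cT: "card T = d + 1 - card C"
    unfolding T_def using phiC finC phi(2) by (simp add: card_Diff_subset card_image)
  have cardI: "card I = prod ((-) (d + 1 - card C)) {0..<card F}"
    unfolding I_def using card_inj_on_subset_funcset[of F T F] finF cT unfolding T_def by simp
  have Lsub: "\<And>u. u \<in> {1..d} \<Longrightarrow> L u \<subseteq> {1..d+1}" using tf unfolding t_feasible_def by blast
  have free: "L u = {1..d+1}" if "u \<in> F" for u
  proof -
    have u: "u \<in> {1..d}" "\<not> constrained d L u" using that unfolding Fdef Cdef by auto
    then have "card (L u) = d + 1" unfolding constrained_def by auto
    then show ?thesis using card_subset_eq[OF _ Lsub[OF u(1)]] by simp
  qed
  have bij: "bij_betw (\<lambda>\<alpha>'. restrict \<alpha>' F) X I"
    unfolding bij_betw_def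
  proof (intro conjI)
    show "inj_on (\<lambda>\<alpha>'. restrict \<alpha>' F) X"
    proof (rule inj_onI)
      fix a1 a2 assume a1: "a1 \<in> X" and a2: "a2 \<in> X" and e: "restrict a1 F = restrict a2 F"
      have p1: "a1 \<in> {1..d} \<rightarrow>\<^sub>E {1..d+1}" "restrict a1 C = \<phi>" using a1 unfolding X_def L_colourings_def by auto
      have p2: "a2 \<in> {1..d} \<rightarrow>\<^sub>E {1..d+1}" "restrict a2 C = \<phi>" using a2 unfolding X_def L_colourings_def by auto
      show "a1 = a2"
      proof
        fix x
        show "a1 x = a2 x"
        proof (cases "x \<in> C")
          case True
          then show ?thesis using fun_cong[OF p1(2), of x] fun_cong[OF p2(2), of x] by simp
        next
          case False
          show ?thesis
          proof (cases "x \<in> F")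
            case True
            then show ?thesis using fun_cong[OF e, of x] by simp
          next
            case False
            then have "x \<notin> {1..d}" using \<open>x \<notin> C\<close> unfolding Fdef by auto
            then show ?thesis using p1(1) p2(1) by (simp add: PiE_def extensional_def)
          qed
        qed
      qed
    qed
  next
    show "(\<lambda>\<alpha>'. restrict \<alpha>' F) ` X = I"
    proof
      show "(\<lambda>\<alpha>'. restrict \<alpha>' F) ` X \<subseteq> I"
      proof
        fix g assume "g \<in> (\<lambda>\<alpha>'. restrict \<alpha>' F) ` X"
        then obtain a where a: "a \<in> X" and g: "g = restrict a F" by blast
        have p: "a \<in> {1..d} \<rightarrow>\<^sub>E {1..d+1}" "inj_on a {1..d}" "restrict a C = \<phi>"
          using a unfolding X_def L_colourings_def by auto
        have "a x \<in> T" if x: "x \<in> F" for x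
        proof -
          have xd: "x \<in> {1..d}" "x \<notin> C" using x unfolding Fdef by auto
          have "a x \<in> {1..d+1}" using p(1) xd by auto
          moreover have "a x \<notin> \<phi> ` C"
          proof
            assume "a x \<in> \<phi> ` C"
            then obtain c where c: "c \<in> C" "a x = \<phi> c" by blast
            then have "a x = a c" using fun_cong[OF p(3), of c] by simp
            then have "x = c" using p(2) xd(1) c(1) Cd unfolding inj_on_def by blast
            then show False using xd c by simp
          qed
          ultimately show ?thesis unfolding T_def by simp
        qed
        moreover have "inj_on a F" using p(2) unfolding Fdef by (rule inj_on_subset) auto
        ultimately show "g \<in> I" unfolding I_def g by (auto simp: inj_on_def)
      qed
    next
      show "I \<subseteq> (\<lambda>\<alpha>'. restrict \<alpha>' F) ` X"
      proof
        fix g assume g: "g \<in> I"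
        have gp: "g \<in> F \<rightarrow>\<^sub>E T" "inj_on g F" using g unfolding I_def by auto
        define a where "a = (\<lambda>x. if x \<in> C then \<phi> x else g x)"
        have a1: "a \<in> {1..d} \<rightarrow>\<^sub>E {1..d+1}"
        proof (rule PiE_I)
          fix x assume x: "x \<in> {1..d}"
          show "a x \<in> {1..d+1}"
          proof (cases "x \<in> C")
            case True then show ?thesis using phi(1) unfolding a_def by auto
          next
            case False
            then have "x \<in> F" using x unfolding Fdef by auto
            then show ?thesis using gp(1) unfolding a_def T_def using False by auto
          qed
        next
          fix x assume x: "x \<notin> {1..d}"
          then have "x \<notin> C" "x \<notin> F" using Cd unfolding Fdef by auto
          then show "a x = undefined" using gp(1) unfolding a_def by (simp add: PiE_def extensional_def)
        qed
        have a2: "inj_on a {1..d}"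
        proof (rule inj_onI)
          fix x y assume x: "x \<in> {1..d}" and y: "y \<in> {1..d}" and e: "a x = a y"
          show "x = y"
          proof (cases "x \<in> C"; cases "y \<in> C")
            assume "x \<in> C" "y \<in> C" then show ?thesis using e phi(2) unfolding a_def inj_on_def by auto
          next
            assume "x \<in> C" "y \<notin> C"
            then have "y \<in> F" using y unfolding Fdef by auto
            then have "g y \<in> T" using gp(1) by auto
            then show ?thesis using e \<open>x \<in> C\<close> \<open>y \<notin> C\<close> unfolding a_def T_def by (metis DiffD2 imageI)
          next
            assume "x \<notin> C" "y \<in> C"
            then have "x \<in> F" using x unfolding Fdef by auto
            then have "g x \<in> T" using gp(1) by auto
            then show ?thesis using e \<open>x \<notin> C\<close> \<open>y \<in> C\<close> unfolding a_def T_def by (metis DiffD2 imageI)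
          next
            assume "x \<notin> C" "y \<notin> C"
            then have "x \<in> F" "y \<in> F" using x y unfolding Fdef by auto
            then show ?thesis using e gp(2) \<open>x \<notin> C\<close> \<open>y \<notin> C\<close> unfolding a_def inj_on_def by auto
          qed
        qed
        have a3: "\<forall>u\<in>{1..d}. a u \<in> L u"
        proof
          fix u assume u: "u \<in> {1..d}"
          show "a u \<in> L u"
          proof (cases "u \<in> C")
            case True then show ?thesis using phi(3) unfolding a_def by auto
          next
            case False
            then have "u \<in> F" using u unfolding Fdef by auto
            then show ?thesis using free[of u] a1 u by auto
          qed
        qed
        have "restrict a C = \<phi>"
        proof
          fix x show "restrict a C x = \<phi> x"
            using phi(1) unfolding a_def by (auto simp: PiE_def extensional_def)
        qed
        then have "a \<in> X" unfolding X_def L_colourings_def using a1 a2 a3 by auto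
        moreover have "restrict a F = g"
        proof
          fix x show "restrict a F x = g x"
            using gp(1) unfolding a_def Fdef by (auto simp: PiE_def extensional_def)
        qed
        ultimately show "g \<in> (\<lambda>\<alpha>'. restrict \<alpha>' F) ` X" by force
      qed
    qed
  qed
  show ?thesis using bij_betw_same_card[OF bij] cardI unfolding X_def by simp
qed



lemma main_bound:
  fixes d t :: nat and L :: "nat \<Rightarrow> nat set" and \<alpha> \<beta> \<xi>A :: "nat \<Rightarrow> nat" and A :: "nat set"
  assumes tf: "t_feasible d t L" and a: "\<alpha> \<in> L_colourings d L" and b: "\<beta> \<in> L_colourings d L"
    and injA: "inj_on \<xi>A A" and imA: "\<xi>A ` A \<subseteq> {1..d+1}" and listA: "\<forall>u\<in>A. \<xi>A u \<in> L u"
    and Da: "card {u\<in>A. \<alpha> u \<noteq> \<xi>A u} \<le> 1" and Db: "card {u\<in>A. \<xi>A u \<noteq> \<beta> u} \<le> 1"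
    and A_def: "A = {u. constrained d L u \<and> card (L u) \<le> 2 * (3 * t + 2)}"
  shows "card (L_colourings d L) \<le> ((6*t+4)^t * 3^t) *
     card {\<xi> \<in> L_colourings d L. (\<forall>u\<in>A. \<xi> u = \<xi>A u) \<and> good_pair d L \<alpha> \<xi> \<and> good_pair d L \<xi> \<beta>}"
proof -
  define \<Omega> where "\<Omega> = L_colourings d L"
  define C where "C = {u. constrained d L u}"
  define B where "B = C - A"
  define F where "F = {1..d} - C"
  define OC where "OC = {\<phi> \<in> C \<rightarrow>\<^sub>E {1..d+1}. inj_on \<phi> C \<and> (\<forall>u\<in>C. \<phi> u \<in> L u)}"
  define S where "S = \<alpha> ` C \<union> \<beta> ` C \<union> \<xi>A ` A"
  define GC where "GC = {\<phi> \<in> OC. (\<forall>u\<in>A. \<phi> u = \<xi>A u) \<and> (\<forall>b\<in>B. \<phi> b \<notin> S)}"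
  define G' where "G' = {\<xi> \<in> \<Omega>. restrict \<xi> C \<in> GC}"
  define Good where "Good = {\<xi> \<in> \<Omega>. (\<forall>u\<in>A. \<xi> u = \<xi>A u) \<and> good_pair d L \<alpha> \<xi> \<and> good_pair d L \<xi> \<beta>}"
  define N where "N = prod ((-) (d + 1 - card C)) {0..<card F}"
  define M where "M = (\<lambda>b. L b - S)"
  define H where "H = {\<psi> \<in> Pi\<^sub>E B M. inj_on \<psi> B}"
  have Cd: "C \<subseteq> {1..d}" unfolding C_def constrained_def by auto
  have Ct: "C \<subseteq> {1..t}"
  proof
    fix u assume "u \<in> C"
    then have u: "u \<in> {1..d}" "card (L u) \<noteq> d + 1" unfolding C_def constrained_def by auto
    then have "u \<le> t" using tf unfolding t_feasible_def by (meson not_le)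
    then show "u \<in> {1..t}" using u by auto
  qed
  have finC: "finite C" using Cd finite_subset by blast
  have cardC: "card C \<le> t" using card_mono[OF _ Ct] by simp
  have AC: "A \<subseteq> C" unfolding A_def C_def by auto
  have finA: "finite A" using AC finC finite_subset by blast
  have cardA: "card A \<le> t" using card_mono[OF finC AC] cardC by simp
  have finB: "finite B" unfolding B_def using finC by simp
  have cardB: "card B \<le> t" using card_mono[OF finC, of B] cardC unfolding B_def by auto
  have Lsub: "\<And>u. u \<in> {1..d} \<Longrightarrow> L u \<subseteq> {1..d+1}" using tf unfolding t_feasible_def by blast
  have finL: "\<And>u. u \<in> {1..d} \<Longrightarrow> finite (L u)" using Lsub finite_subset by blast
  have finO: "finite \<Omega>" unfolding \<Omega>_def L_colourings_def
    by (rule finite_subset[of _ "{1..d} \<rightarrow>\<^sub>E {1..d+1}"]) (auto intro!: finite_PiE)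
  have finOC: "finite OC" unfolding OC_def
    by (rule finite_subset[of _ "C \<rightarrow>\<^sub>E {1..d+1}"]) (auto intro!: finite_PiE finC)
  have GCOC: "GC \<subseteq> OC" unfolding GC_def by auto
  have finGC: "finite GC" using finite_subset[OF GCOC finOC] .
  have restr: "restrict a' C \<in> OC" if "a' \<in> \<Omega>" for a'
  proof -
    have p: "a' \<in> {1..d} \<rightarrow>\<^sub>E {1..d+1}" "inj_on a' {1..d}" "\<forall>u\<in>{1..d}. a' u \<in> L u"
      using that unfolding \<Omega>_def L_colourings_def by auto
    have "inj_on a' C" using p(2) Cd by (rule inj_on_subset)
    then have "inj_on (restrict a' C) C" by (simp add: inj_on_def)
    moreover have "restrict a' C \<in> C \<rightarrow>\<^sub>E {1..d+1}" using p(1) Cd by auto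
    moreover have "\<forall>u\<in>C. restrict a' C u \<in> L u" using p(3) Cd by auto
    ultimately show ?thesis unfolding OC_def by simp
  qed
  have fiber: "card {a'\<in>\<Omega>. restrict a' C = \<phi>} = N" if "\<phi> \<in> OC" for \<phi>
    unfolding \<Omega>_def N_def
    by (rule fiber_lemma[OF tf C_def F_def]) (use that in \<open>auto simp: OC_def\<close>)
  have cardO: "card \<Omega> = card OC * N"
    by (rule fiber_count[OF finO finOC, of "\<lambda>x. restrict x C"]) (use restr fiber in auto)
  have cardG': "card G' = card GC * N"
  proof (rule fiber_count[of G' GC "\<lambda>x. restrict x C"])
    show "finite G'" unfolding G'_def using finO by simp
    show "finite GC" by fact
    show "\<And>x. x \<in> G' \<Longrightarrow> restrict x C \<in> GC" unfolding G'_def by auto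
    fix y assume y: "y \<in> GC"
    have "{x \<in> G'. restrict x C = y} = {x\<in>\<Omega>. restrict x C = y}" unfolding G'_def using y by auto
    then show "card {x \<in> G'. restrict x C = y} = N" using fiber GCOC y by auto
  qed
  have OCle: "card OC \<le> (\<Prod>u\<in>C. card (L u))"
  proof -
    have "OC \<subseteq> Pi\<^sub>E C L" unfolding OC_def by auto
    moreover have "finite (Pi\<^sub>E C L)" using finC finL Cd by (auto intro!: finite_PiE)
    ultimately have "card OC \<le> card (Pi\<^sub>E C L)" by (rule card_mono[rotated])
    then show ?thesis using finC by (simp add: card_PiE)
  qed
  define mg where "mg = (\<lambda>\<psi> :: nat \<Rightarrow> nat. \<lambda>x. if x \<in> A then \<xi>A x else \<psi> x)"
  have BC: "B \<subseteq> C" unfolding B_def by auto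
  have AB: "A \<inter> B = {}" unfolding B_def by auto
  have Bd: "B \<subseteq> {1..d}" using BC Cd by auto
  have mgGC: "mg \<psi> \<in> GC" if psi: "\<psi> \<in> H" for \<psi>
  proof -
    have pp: "\<psi> \<in> Pi\<^sub>E B M" "inj_on \<psi> B" using psi unfolding H_def by auto
    have pB: "\<psi> b \<in> L b" "\<psi> b \<notin> S" if "b \<in> B" for b using pp(1) that unfolding M_def by auto
    have m1: "mg \<psi> \<in> C \<rightarrow>\<^sub>E {1..d+1}"
    proof (rule PiE_I)
      fix x assume x: "x \<in> C"
      show "mg \<psi> x \<in> {1..d+1}"
      proof (cases "x \<in> A")
        case True then show ?thesis using imA unfolding mg_def by auto
      next
        case False
        then have "x \<in> B" using x unfolding B_def by auto
        then have "x \<in> {1..d}" "\<psi> x \<in> L x" using Bd pB(1) by auto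
        then have "\<psi> x \<in> {1..d+1}" using Lsub by blast
        then show ?thesis using False unfolding mg_def by simp
      qed
    next
      fix x assume x: "x \<notin> C"
      then have "x \<notin> A" "x \<notin> B" using AC BC by auto
      then show "mg \<psi> x = undefined" using pp(1) unfolding mg_def by (simp add: PiE_def extensional_def)
    qed
    have m2: "inj_on (mg \<psi>) C"
    proof (rule inj_onI)
      fix x y assume x: "x \<in> C" and y: "y \<in> C" and e: "mg \<psi> x = mg \<psi> y"
      show "x = y"
      proof (cases "x \<in> A"; cases "y \<in> A")
        assume "x \<in> A" "y \<in> A" then show ?thesis using e injA unfolding mg_def inj_on_def by auto
      next
        assume xy: "x \<in> A" "y \<notin> A"
        then have "y \<in> B" using y unfolding B_def by auto
        then have "\<psi> y \<notin> S" by (rule pB(2))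
        moreover have "\<psi> y = \<xi>A x" using e xy unfolding mg_def by simp
        ultimately show ?thesis using xy(1) unfolding S_def by auto
      next
        assume xy: "x \<notin> A" "y \<in> A"
        then have "x \<in> B" using x unfolding B_def by auto
        then have "\<psi> x \<notin> S" by (rule pB(2))
        moreover have "\<psi> x = \<xi>A y" using e xy unfolding mg_def by simp
        ultimately show ?thesis using xy(2) unfolding S_def by auto
      next
        assume xy: "x \<notin> A" "y \<notin> A"
        then have "x \<in> B" "y \<in> B" using x y unfolding B_def by auto
        then show ?thesis using e xy pp(2) unfolding mg_def inj_on_def by auto
      qed
    qed
    have m3: "\<forall>u\<in>C. mg \<psi> u \<in> L u"
    proof
      fix u assume u: "u \<in> C"
      show "mg \<psi> u \<in> L u"
      proof (cases "u \<in> A")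
        case True then show ?thesis using listA unfolding mg_def by auto
      next
        case False
        then have "u \<in> B" using u unfolding B_def by auto
        then show ?thesis using pB(1) False unfolding mg_def by auto
      qed
    qed
    have m4: "\<forall>u\<in>A. mg \<psi> u = \<xi>A u" unfolding mg_def by auto
    have m5: "\<forall>b\<in>B. mg \<psi> b \<notin> S" using pB(2) AB unfolding mg_def by auto
    show ?thesis unfolding GC_def OC_def using m1 m2 m3 m4 m5 by auto
  qed
  have mginj: "inj_on mg H"
  proof (rule inj_onI)
    fix p q assume p: "p \<in> H" and q: "q \<in> H" and e: "mg p = mg q"
    show "p = q"
    proof
      fix x
      show "p x = q x"
      proof (cases "x \<in> A")
        case True
        then have "x \<notin> B" using AB by auto
        then show ?thesis using p q unfolding H_def by (auto simp: PiE_def extensional_def)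
      next
        case False
        then show ?thesis using fun_cong[OF e, of x] unfolding mg_def by simp
      qed
    qed
  qed
  have HGC: "card H \<le> card GC"
    using card_inj_on_le[OF mginj _ finGC] mgGC by blast
  have Hge: "(\<Prod>b\<in>B. card (M b) - t) \<le> card H"
    unfolding H_def by (rule inj_count) (use finB Bd finL cardB M_def in auto)
  have finS: "finite S" unfolding S_def using finC finA by simp
  have cardS: "card S \<le> 3 * t"
  proof -
    have "card S \<le> card (\<alpha> ` C) + card (\<beta> ` C) + card (\<xi>A ` A)"
      unfolding S_def by (meson card_Un_le le_trans add_le_mono1)
    also have "\<dots> \<le> card C + card C + card A" using card_image_le finC finA by (meson add_le_mono)
    finally show ?thesis using cardC cardA by linarith
  qed
  have Mb: "card (L b) - 3 * t \<le> card (M b)" for b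
  proof -
    have "card (L b) - card S \<le> card (M b)" unfolding M_def using finS by (rule diff_card_le_card_Diff)
    then show ?thesis using cardS by linarith
  qed
  have bigB: "card (L b) > 6 * t + 4" if "b \<in> B" for b using that unfolding B_def A_def C_def by auto
  have smallA: "card (L a) \<le> 6 * t + 4" if "a \<in> A" for a using that unfolding A_def by auto
  have PA: "(\<Prod>a\<in>A. card (L a)) \<le> (6*t+4)^t"
  proof -
    have "(\<Prod>a\<in>A. card (L a)) \<le> (\<Prod>a\<in>A. 6*t+4)" by (rule prod_mono) (use smallA in auto)
    also have "\<dots> = (6*t+4)^card A" by simp
    also have "\<dots> \<le> (6*t+4)^t" using cardA by (intro power_increasing) auto
    finally show ?thesis .
  qed
  have PB: "(\<Prod>b\<in>B. card (L b)) \<le> 3^t * card H"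
  proof -
    have "(\<Prod>b\<in>B. card (L b)) \<le> (\<Prod>b\<in>B. 3 * (card (M b) - t))"
    proof (rule prod_mono)
      fix b assume "b \<in> B"
      then show "0 \<le> card (L b) \<and> card (L b) \<le> 3 * (card (M b) - t)"
        using bigB[of b] Mb[of b] by linarith
    qed
    also have "\<dots> = 3 ^ card B * (\<Prod>b\<in>B. card (M b) - t)" by (simp add: prod.distrib)
    also have "\<dots> \<le> 3^t * card H"
      using Hge cardB by (intro mult_le_mono power_increasing) auto
    finally show ?thesis .
  qed
  have PC: "(\<Prod>u\<in>C. card (L u)) \<le> ((6*t+4)^t * 3^t) * card GC"
  proof -
    have "(\<Prod>u\<in>C. card (L u)) = (\<Prod>u\<in>C - A. card (L u)) * (\<Prod>u\<in>A. card (L u))"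
      by (rule prod.subset_diff[OF AC finC])
    also have "\<dots> \<le> (3^t * card H) * (6*t+4)^t" using PA PB unfolding B_def by (rule mult_le_mono[rotated])
    also have "\<dots> \<le> (3^t * card GC) * (6*t+4)^t" using HGC by simp
    finally show ?thesis by (simp add: ac_simps)
  qed
  have G'Good: "G' \<subseteq> Good"
  proof
    fix \<xi> assume "\<xi> \<in> G'"
    then have x: "\<xi> \<in> \<Omega>" and r: "restrict \<xi> C \<in> GC" unfolding G'_def by auto
    have onA: "\<forall>u\<in>A. \<xi> u = \<xi>A u" using r AC unfolding GC_def by (auto simp: subset_iff)
    have onB: "\<forall>b\<in>B. \<xi> b \<notin> S" using r BC unfolding GC_def by (auto simp: subset_iff)
    have Ad: "A \<subseteq> {1..d}" using AC Cd by auto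
    have e1: "{u\<in>A. \<alpha> u \<noteq> \<xi> u} = {u\<in>A. \<alpha> u \<noteq> \<xi>A u}" using onA by auto
    have e2: "{u\<in>A. \<xi> u \<noteq> \<beta> u} = {u\<in>A. \<xi>A u \<noteq> \<beta> u}" using onA by auto
    have g1: "good_pair d L \<alpha> \<xi>"
    proof (rule good1[OF a x[unfolded \<Omega>_def] _ Ad])
      fix z assume "constrained d L z" "z \<notin> A"
      then have "z \<in> B" unfolding B_def C_def by auto
      then show "\<xi> z \<notin> \<alpha> ` {u. constrained d L u}" using onB unfolding S_def C_def by auto
    next
      show "card {u\<in>A. \<alpha> u \<noteq> \<xi> u} \<le> 1" using e1 Da by simp
    qed
    have g2: "good_pair d L \<xi> \<beta>"
    proof (rule good2[OF x[unfolded \<Omega>_def] b _ Ad])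
      fix z assume "constrained d L z" "z \<notin> A"
      then have "z \<in> B" unfolding B_def C_def by auto
      then show "\<xi> z \<notin> \<beta> ` {u. constrained d L u}" using onB unfolding S_def C_def by auto
    next
      show "card {u\<in>A. \<xi> u \<noteq> \<beta> u} \<le> 1" using e2 Db by simp
    qed
    show "\<xi> \<in> Good" unfolding Good_def using x onA g1 g2 by auto
  qed
  have finGood: "finite Good" unfolding Good_def using finO by simp
  have "card \<Omega> = card OC * N" by (rule cardO)
  also have "\<dots> \<le> (\<Prod>u\<in>C. card (L u)) * N" using OCle by simp
  also have "\<dots> \<le> ((6*t+4)^t * 3^t) * card GC * N" using PC by simp
  also have "\<dots> = ((6*t+4)^t * 3^t) * card G'" using cardG' by simp
  also have "\<dots> \<le> ((6*t+4)^t * 3^t) * card Good" using card_mono[OF finGood G'Good] by simp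
  finally show ?thesis unfolding \<Omega>_def Good_def .
qed


theorem lemma16:
  "\<forall>t::nat. t > 0 \<longrightarrow> (\<exists>c::real. c > 0 \<and>
     (\<forall>d::nat. \<forall>L \<alpha> \<beta> (\<xi>A :: nat \<Rightarrow> nat).
        let A = {u. constrained d L u \<and> card (L u) \<le> 2 * (3 * t + 2)} in
        d \<ge> 1 \<longrightarrow> t_feasible d t L \<longrightarrow>
        \<alpha> \<in> L_colourings d L \<longrightarrow> \<beta> \<in> L_colourings d L \<longrightarrow>
        inj_on \<xi>A A \<longrightarrow> \<xi>A ` A \<subseteq> {1..d+1} \<longrightarrow> (\<forall>u\<in>A. \<xi>A u \<in> L u) \<longrightarrow>
        card {u\<in>A. \<alpha> u \<noteq> \<xi>A u} \<le> 1 \<longrightarrow>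
        card {u\<in>A. \<xi>A u \<noteq> \<beta> u} \<le> 1 \<longrightarrow>
        real (card {\<xi> \<in> L_colourings d L. (\<forall>u\<in>A. \<xi> u = \<xi>A u) \<and>
                       good_pair d L \<alpha> \<xi> \<and> good_pair d L \<xi> \<beta>})
          \<ge> c * real (card (L_colourings d L))))"
  proof (intro allI impI)
  fix t :: nat assume "t > 0"
  define K :: nat where "K = (6*t+4)^t * 3^t"
  have Kpos: "K > 0" unfolding K_def by simp
  show "\<exists>c::real. c > 0 \<and>
     (\<forall>d::nat. \<forall>L \<alpha> \<beta> (\<xi>A :: nat \<Rightarrow> nat).
        let A = {u. constrained d L u \<and> card (L u) \<le> 2 * (3 * t + 2)} in
        d \<ge> 1 \<longrightarrow> t_feasible d t L \<longrightarrow>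
        \<alpha> \<in> L_colourings d L \<longrightarrow> \<beta> \<in> L_colourings d L \<longrightarrow>
        inj_on \<xi>A A \<longrightarrow> \<xi>A ` A \<subseteq> {1..d+1} \<longrightarrow> (\<forall>u\<in>A. \<xi>A u \<in> L u) \<longrightarrow>
        card {u\<in>A. \<alpha> u \<noteq> \<xi>A u} \<le> 1 \<longrightarrow>
        card {u\<in>A. \<xi>A u \<noteq> \<beta> u} \<le> 1 \<longrightarrow>
        real (card {\<xi> \<in> L_colourings d L. (\<forall>u\<in>A. \<xi> u = \<xi>A u) \<and>
                       good_pair d L \<alpha> \<xi> \<and> good_pair d L \<xi> \<beta>})
          \<ge> c * real (card (L_colourings d L)))"
  proof (rule exI[of _ "1 / real K"], intro conjI allI)
    show "1 / real K > 0" using Kpos by simp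
  next
    fix d :: nat and L :: "nat \<Rightarrow> nat set" and \<alpha> \<beta> \<xi>A :: "nat \<Rightarrow> nat"
    show "let A = {u. constrained d L u \<and> card (L u) \<le> 2 * (3 * t + 2)} in
        d \<ge> 1 \<longrightarrow> t_feasible d t L \<longrightarrow>
        \<alpha> \<in> L_colourings d L \<longrightarrow> \<beta> \<in> L_colourings d L \<longrightarrow>
        inj_on \<xi>A A \<longrightarrow> \<xi>A ` A \<subseteq> {1..d+1} \<longrightarrow> (\<forall>u\<in>A. \<xi>A u \<in> L u) \<longrightarrow>
        card {u\<in>A. \<alpha> u \<noteq> \<xi>A u} \<le> 1 \<longrightarrow>
        card {u\<in>A. \<xi>A u \<noteq> \<beta> u} \<le> 1 \<longrightarrow>
        real (card {\<xi> \<in> L_colourings d L. (\<forall>u\<in>A. \<xi> u = \<xi>A u) \<and>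
                       good_pair d L \<alpha> \<xi> \<and> good_pair d L \<xi> \<beta>})
          \<ge> 1 / real K * real (card (L_colourings d L))"
      unfolding Let_def
    proof (intro impI)
      define A where "A = {u. constrained d L u \<and> card (L u) \<le> 2 * (3 * t + 2)}"
      assume h: "t_feasible d t L" "\<alpha> \<in> L_colourings d L" "\<beta> \<in> L_colourings d L"
        "inj_on \<xi>A {u. constrained d L u \<and> card (L u) \<le> 2 * (3 * t + 2)}"
        "\<xi>A ` {u. constrained d L u \<and> card (L u) \<le> 2 * (3 * t + 2)} \<subseteq> {1..d+1}"
        "\<forall>u\<in>{u. constrained d L u \<and> card (L u) \<le> 2 * (3 * t + 2)}. \<xi>A u \<in> L u"
        "card {u\<in>{u. constrained d L u \<and> card (L u) \<le> 2 * (3 * t + 2)}. \<alpha> u \<noteq> \<xi>A u} \<le> 1"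
        "card {u\<in>{u. constrained d L u \<and> card (L u) \<le> 2 * (3 * t + 2)}. \<xi>A u \<noteq> \<beta> u} \<le> 1"
      have mb: "card (L_colourings d L) \<le> K *
         card {\<xi> \<in> L_colourings d L. (\<forall>u\<in>A. \<xi> u = \<xi>A u) \<and> good_pair d L \<alpha> \<xi> \<and> good_pair d L \<xi> \<beta>}"
        unfolding K_def by (rule main_bound[OF h(1,2,3) h(4-8)[folded A_def] A_def])
      define G where "G = {\<xi> \<in> L_colourings d L. (\<forall>u\<in>A. \<xi> u = \<xi>A u) \<and> good_pair d L \<alpha> \<xi> \<and> good_pair d L \<xi> \<beta>}"
      have "real (card (L_colourings d L)) \<le> real (K * card G)"
        using mb unfolding G_def by (simp only: of_nat_le_iff)
      then have "real (card (L_colourings d L)) \<le> real (card G) * real K" by (simp add: mult.commute)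
      then have "real (card (L_colourings d L)) / real K \<le> real (card G)"
        using Kpos by (simp only: pos_divide_le_eq of_nat_0_less_iff)
      then have "1 / real K * real (card (L_colourings d L)) \<le> real (card G)" by simp
      then show "1 / real K * real (card (L_colourings d L)) \<le>
         real (card {\<xi> \<in> L_colourings d L. (\<forall>u\<in>{u. constrained d L u \<and> card (L u) \<le> 2 * (3 * t + 2)}. \<xi> u = \<xi>A u) \<and>
                       good_pair d L \<alpha> \<xi> \<and> good_pair d L \<xi> \<beta>})"
        unfolding G_def A_def .
    qed
  qed
qed

end
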